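(* There exist positive constants $C_1, C_2$ that do not depend on $\beta$ such that, for every $\beta>0$, \[ \mathbb{P}_{(0, y +\beta)}\left(\tau_1\left(-\frac{\beta}{2}\right) \le \tau_2\left(\frac{y}{2} + \beta\right)\right) \le C_1 \mathrm{e}^{-C_2\beta y} \] for all $y \ge \frac{1}{4\beta}$ if $\beta \ge 1$, and for all $y \ge \frac{64}{\beta}\log \frac{1}{\beta}$ if $\beta <1$.
   Context: For $\beta>0$ and an initial state $(x,y)$ with $x\le 0$, $y\ge 0$, let $(Q_1,Q_2)$ be the continuous process on $[0,\infty)$ solving \[ Q_1(t) = x + \sqrt{2}W(t) - \beta t + \int_0^t(-Q_1(s)+Q_2(s))\,ds - L(t),\qquad Q_2(t) = y + L(t) - \int_0^t Q_2(s)\,ds, \] where $W$ is a standard Brownian motion and $L$ is the unique nondecreasing nonnegative càdlàg process with $L(0)=0$ such that $Q_1(t)\le 0$ for all $t$ and $\int_0^\infty \mathbf{1}_{[Q_1(t)<0]}\,dL(t)=0$. $\mathbb{P}_{(x,y)}$ denotes probability when $(Q_1(0),Q_2(0))=(x,y)$; $\tau_i(z)=\inf\{t\ge0: Q_i(t)=z\}$ for $i=1,2$. *)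

theory Defs
  imports "HOL-Probability.Probability"
begin

definition standard_BM :: "'a measure \<Rightarrow> (real \<Rightarrow> 'a \<Rightarrow> real) \<Rightarrow> bool" where
  "standard_BM M W \<longleftrightarrow>
     prob_space M \<and>
     (\<forall>t\<ge>0. W t \<in> borel_measurable M) \<and>
     (AE \<omega> in M. W 0 \<omega> = 0 \<and> continuous_on {0..} (\<lambda>t. W t \<omega>)) \<and>
     (\<forall>s t. 0 \<le> s \<and> s < t \<longrightarrow>
        distributed M lborel (\<lambda>\<omega>. W t \<omega> - W s \<omega>) (\<lambda>x. ennreal (normal_density 0 (sqrt (t - s)) x))) \<and>
     (\<forall>(n::nat) (ts::nat \<Rightarrow> real). 0 \<le> ts 0 \<and> (\<forall>i<n. ts i < ts (Suc i)) \<longrightarrow>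
        prob_space.indep_vars M (\<lambda>_. borel) (\<lambda>i \<omega>. W (ts (Suc i)) \<omega> - W (ts i) \<omega>) {..<n})"

definition cadlag_on_nonneg :: "(real \<Rightarrow> real) \<Rightarrow> bool" where
  "cadlag_on_nonneg f \<longleftrightarrow>
     (\<forall>t\<ge>0. continuous (at_right t) f) \<and>
     (\<forall>t>0. \<exists>l. (f \<longlongrightarrow> l) (at_left t))"

text \<open>The condition
  \<open>\<integral> 1[Q1(t)<0] dL(t) = 0\<close> is the Lebesgue--Stieltjes integral w.r.t. the path of L
  (extended by 0 to negative times).\<close>
definition reflected_solution ::
  "'a measure \<Rightarrow> real \<Rightarrow> real \<Rightarrow> real \<Rightarrow> (real \<Rightarrow> 'a \<Rightarrow> real) \<Rightarrow>
   (real \<Rightarrow> 'a \<Rightarrow> real) \<Rightarrow> (real \<Rightarrow> 'a \<Rightarrow> real) \<Rightarrow> (real \<Rightarrow> 'a \<Rightarrow> real) \<Rightarrow> bool" where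
  "reflected_solution M \<beta> x y W Q1 Q2 L \<longleftrightarrow>
     (AE \<omega> in M.
        continuous_on {0..} (\<lambda>t. Q1 t \<omega>) \<and>
        continuous_on {0..} (\<lambda>t. Q2 t \<omega>) \<and>
        (\<forall>t\<ge>0. Q1 t \<omega> = x + sqrt 2 * W t \<omega> - \<beta> * t
                   + integral {0..t} (\<lambda>s. - Q1 s \<omega> + Q2 s \<omega>) - L t \<omega>) \<and>
        (\<forall>t\<ge>0. Q2 t \<omega> = y + L t \<omega> - integral {0..t} (\<lambda>s. Q2 s \<omega>)) \<and>
        L 0 \<omega> = 0 \<and>
        mono_on {0..} (\<lambda>t. L t \<omega>) \<and>
        (\<forall>t\<ge>0. 0 \<le> L t \<omega>) \<and>
        cadlag_on_nonneg (\<lambda>t. L t \<omega>) \<and>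
        (\<forall>t\<ge>0. Q1 t \<omega> \<le> 0) \<and>
        (\<integral>\<^sup>+ t. indicator {t. 0 \<le> t \<and> Q1 t \<omega> < 0} t
            \<partial>interval_measure (\<lambda>t. L (max 0 t) \<omega>)) = 0)"

text \<open>Hitting time inf{t >= 0. Q(t) = z}, with inf of the empty set = infinity.\<close>
definition hit_time :: "(real \<Rightarrow> 'a \<Rightarrow> real) \<Rightarrow> real \<Rightarrow> 'a \<Rightarrow> ereal" where
  "hit_time Q z \<omega> = Inf (ereal ` {t. 0 \<le> t \<and> Q t \<omega> = z})"

end

theory Submission
  imports Defs
begin

lemma gauss_tail_upper:
  fixes \<sigma> c :: real
  assumes "\<sigma> > 0" "c \<ge> 0"
  shows "(\<integral>\<^sup>+x. ennreal (normal_density 0 \<sigma> x) * indicator {c..} x \<partial>lborel) \<le> ennreal (exp (- c\<^sup>2 / (2 * \<sigma>\<^sup>2)))"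
proof -
  have pt: "ennreal (normal_density 0 \<sigma> x) * indicator {c..} x \<le> ennreal (exp (- c\<^sup>2 / (2 * \<sigma>\<^sup>2))) * ennreal (normal_density c \<sigma> x)" for x
  proof (cases "c \<le> x")
    case True
    have "- x\<^sup>2 \<le> - c\<^sup>2 - (x - c)\<^sup>2" using True assms mult_nonneg_nonneg[of c "x - c"] by (simp add: power2_eq_square algebra_simps)
    then have "(- x\<^sup>2) / (2 * \<sigma>\<^sup>2) \<le> (- c\<^sup>2 - (x - c)\<^sup>2) / (2 * \<sigma>\<^sup>2)"
      by (rule divide_right_mono) simp
    then have "- x\<^sup>2 / (2 * \<sigma>\<^sup>2) \<le> - c\<^sup>2 / (2 * \<sigma>\<^sup>2) + - (x - c)\<^sup>2 / (2 * \<sigma>\<^sup>2)"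
      by (simp add: diff_divide_distrib)
    then have "exp (- x\<^sup>2 / (2 * \<sigma>\<^sup>2)) \<le> exp (- c\<^sup>2 / (2 * \<sigma>\<^sup>2)) * exp (- (x - c)\<^sup>2 / (2 * \<sigma>\<^sup>2))"
      by (simp add: exp_add[symmetric])
    then have "normal_density 0 \<sigma> x \<le> exp (- c\<^sup>2 / (2 * \<sigma>\<^sup>2)) * normal_density c \<sigma> x"
      unfolding normal_density_def by (simp add: divide_right_mono)
    then show ?thesis using True by (simp add: ennreal_mult[symmetric])
  next
    case False then show ?thesis by simp
  qed
  have "(\<integral>\<^sup>+x. ennreal (normal_density 0 \<sigma> x) * indicator {c..} x \<partial>lborel) \<le>
        (\<integral>\<^sup>+x. ennreal (exp (- c\<^sup>2 / (2 * \<sigma>\<^sup>2))) * ennreal (normal_density c \<sigma> x) \<partial>lborel)"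
    by (intro nn_integral_mono pt)
  also have "\<dots> = ennreal (exp (- c\<^sup>2 / (2 * \<sigma>\<^sup>2))) * (\<integral>\<^sup>+x. ennreal (normal_density c \<sigma> x) \<partial>lborel)"
    by (simp add: nn_integral_cmult)
  also have "(\<integral>\<^sup>+x. ennreal (normal_density c \<sigma> x) \<partial>lborel) = 1"
    using assms by (subst nn_integral_eq_integral) auto
  finally show ?thesis by simp
qed


lemma gauss_tail_lower:
  fixes \<sigma> c :: real
  assumes "\<sigma> > 0" "c \<ge> 0"
  shows "(\<integral>\<^sup>+x. ennreal (normal_density 0 \<sigma> x) * indicator {..-c} x \<partial>lborel) \<le> ennreal (exp (- c\<^sup>2 / (2 * \<sigma>\<^sup>2)))"
proof -
  have pt: "ennreal (normal_density 0 \<sigma> x) * indicator {..-c} x \<le> ennreal (exp (- c\<^sup>2 / (2 * \<sigma>\<^sup>2))) * ennreal (normal_density (-c) \<sigma> x)" for x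
  proof (cases "x \<le> -c")
    case True
    have "- x\<^sup>2 \<le> - c\<^sup>2 - (x + c)\<^sup>2" using True assms mult_nonneg_nonpos[of c "x + c"] by (simp add: power2_eq_square algebra_simps)
    then have "(- x\<^sup>2) / (2 * \<sigma>\<^sup>2) \<le> (- c\<^sup>2 - (x + c)\<^sup>2) / (2 * \<sigma>\<^sup>2)"
      by (rule divide_right_mono) simp
    then have "- x\<^sup>2 / (2 * \<sigma>\<^sup>2) \<le> - c\<^sup>2 / (2 * \<sigma>\<^sup>2) + - (x + c)\<^sup>2 / (2 * \<sigma>\<^sup>2)"
      by (simp add: diff_divide_distrib)
    then have "exp (- x\<^sup>2 / (2 * \<sigma>\<^sup>2)) \<le> exp (- c\<^sup>2 / (2 * \<sigma>\<^sup>2)) * exp (- (x + c)\<^sup>2 / (2 * \<sigma>\<^sup>2))"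
      by (simp add: exp_add[symmetric])
    then have "normal_density 0 \<sigma> x \<le> exp (- c\<^sup>2 / (2 * \<sigma>\<^sup>2)) * normal_density (-c) \<sigma> x"
      unfolding normal_density_def by (simp add: divide_right_mono)
    then show ?thesis using True by (simp add: ennreal_mult[symmetric])
  next
    case False then show ?thesis by simp
  qed
  have "(\<integral>\<^sup>+x. ennreal (normal_density 0 \<sigma> x) * indicator {..-c} x \<partial>lborel) \<le>
        (\<integral>\<^sup>+x. ennreal (exp (- c\<^sup>2 / (2 * \<sigma>\<^sup>2))) * ennreal (normal_density (-c) \<sigma> x) \<partial>lborel)"
    by (intro nn_integral_mono pt)
  also have "\<dots> = ennreal (exp (- c\<^sup>2 / (2 * \<sigma>\<^sup>2))) * (\<integral>\<^sup>+x. ennreal (normal_density (-c) \<sigma> x) \<partial>lborel)"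
    by (simp add: nn_integral_cmult)
  also have "(\<integral>\<^sup>+x. ennreal (normal_density (-c) \<sigma> x) \<partial>lborel) = 1"
    using assms by (subst nn_integral_eq_integral) auto
  finally show ?thesis by simp
qed


lemma bm_tail_up:
  assumes "standard_BM M W" "0 \<le> s" "s < t" "0 \<le> c"
  shows "measure M {\<omega> \<in> space M. c \<le> W t \<omega> - W s \<omega>} \<le> exp (- c\<^sup>2 / (2 * (t - s)))"
proof -
  have ps: "prob_space M" using assms(1) unfolding standard_BM_def by auto
  have d: "distributed M lborel (\<lambda>\<omega>. W t \<omega> - W s \<omega>) (\<lambda>x. ennreal (normal_density 0 (sqrt (t - s)) x))"
    using assms unfolding standard_BM_def by auto
  have "emeasure M ((\<lambda>\<omega>. W t \<omega> - W s \<omega>) -` {c..} \<inter> space M) = (\<integral>\<^sup>+x. ennreal (normal_density 0 (sqrt (t - s)) x) * indicator {c..} x \<partial>lborel)"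
    by (rule distributed_emeasure[OF d]) simp
  also have "\<dots> \<le> ennreal (exp (- c\<^sup>2 / (2 * (sqrt (t - s))\<^sup>2)))"
    by (rule gauss_tail_upper) (use assms in auto)
  also have "(sqrt (t - s))\<^sup>2 = t - s" using assms by simp
  finally have "emeasure M {\<omega> \<in> space M. c \<le> W t \<omega> - W s \<omega>} \<le> ennreal (exp (- c\<^sup>2 / (2 * (t - s))))"
    by (simp add: vimage_def Int_def conj_commute)
  then show ?thesis unfolding measure_def by (intro enn2real_leI) auto
qed

lemma bm_tail_low:
  assumes "standard_BM M W" "0 \<le> s" "s < t" "0 \<le> c"
  shows "measure M {\<omega> \<in> space M. W t \<omega> - W s \<omega> \<le> - c} \<le> exp (- c\<^sup>2 / (2 * (t - s)))"
proof -
  have ps: "prob_space M" using assms(1) unfolding standard_BM_def by auto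
  have d: "distributed M lborel (\<lambda>\<omega>. W t \<omega> - W s \<omega>) (\<lambda>x. ennreal (normal_density 0 (sqrt (t - s)) x))"
    using assms unfolding standard_BM_def by auto
  have "emeasure M ((\<lambda>\<omega>. W t \<omega> - W s \<omega>) -` {..-c} \<inter> space M) = (\<integral>\<^sup>+x. ennreal (normal_density 0 (sqrt (t - s)) x) * indicator {..-c} x \<partial>lborel)"
    by (rule distributed_emeasure[OF d]) simp
  also have "\<dots> \<le> ennreal (exp (- c\<^sup>2 / (2 * (sqrt (t - s))\<^sup>2)))"
    by (rule gauss_tail_lower) (use assms in auto)
  also have "(sqrt (t - s))\<^sup>2 = t - s" using assms by simp
  finally have "emeasure M {\<omega> \<in> space M. W t \<omega> - W s \<omega> \<le> - c} \<le> ennreal (exp (- c\<^sup>2 / (2 * (t - s))))"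
    by (simp add: vimage_def Int_def conj_commute)
  then show ?thesis unfolding measure_def by (intro enn2real_leI) auto
qed

lemma bm_meas:
  assumes "standard_BM M W" "0 \<le> t"
  shows "W t \<in> borel_measurable M"
  using assms unfolding standard_BM_def by auto

lemma bm_tail_abs:
  assumes "standard_BM M W" "0 \<le> s" "s < t" "0 \<le> c"
  shows "measure M {\<omega> \<in> space M. c \<le> \<bar>W t \<omega> - W s \<omega>\<bar>} \<le> 2 * exp (- c\<^sup>2 / (2 * (t - s)))"
proof -
  have [measurable]: "W t \<in> borel_measurable M" "W s \<in> borel_measurable M"
    using bm_meas[OF assms(1)] assms by auto
  have "{\<omega> \<in> space M. c \<le> \<bar>W t \<omega> - W s \<omega>\<bar>} = {\<omega> \<in> space M. c \<le> W t \<omega> - W s \<omega>} \<union> {\<omega> \<in> space M. W t \<omega> - W s \<omega> \<le> - c}"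
    by auto
  also have "measure M \<dots> \<le> measure M {\<omega> \<in> space M. c \<le> W t \<omega> - W s \<omega>} + measure M {\<omega> \<in> space M. W t \<omega> - W s \<omega> \<le> - c}"
    by (rule measure_Un_le) measurable
  also have "\<dots> \<le> 2 * exp (- c\<^sup>2 / (2 * (t - s)))"
    using bm_tail_up[OF assms] bm_tail_low[OF assms] by simp
  finally show ?thesis .
qed

lemma dyadic_chain:
  fixes f :: "real \<Rightarrow> real" and \<delta> :: "nat \<Rightarrow> real"
  assumes inc: "\<And>n k. k < 2^n \<Longrightarrow> \<bar>f (u + real (k+1) * h / 2^n) - f (u + real k * h / 2^n)\<bar> \<le> \<delta> n"
  shows "m \<le> 2^n \<Longrightarrow> \<bar>f (u + real m * h / 2^n) - f u\<bar> \<le> (\<Sum>j\<le>n. \<delta> j)"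
proof (induction n arbitrary: m)
  case 0
  then have "m = 0 \<or> m = 1" by auto
  then show ?case
  proof
    assume "m = 0" then show ?thesis using inc[of 0 0] by simp
  next
    assume "m = 1" then show ?thesis using inc[of 0 0] by simp
  qed
next
  case (Suc n)
  define q where "q = m div 2"
  have m: "m = 2 * q \<or> m = 2 * q + 1" unfolding q_def by auto
  have q: "q \<le> 2^n" using Suc.prems unfolding q_def by auto
  have eq: "real (2 * q) * h / 2 ^ Suc n = real q * h / 2^n" by simp
  have IH: "\<bar>f (u + real (2*q) * h / 2 ^ Suc n) - f u\<bar> \<le> (\<Sum>j\<le>n. \<delta> j)"
    using Suc.IH[OF q] eq by simp
  from m show ?case
  proof
    assume "m = 2 * q"
    moreover have "\<delta> (Suc n) \<ge> 0" using inc[of 0 "Suc n"] by (meson abs_ge_zero order_trans zero_less_numeral zero_less_power)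
    ultimately show ?thesis using IH by simp
  next
    assume m1: "m = 2 * q + 1"
    then have "2 * q < 2 ^ Suc n" using Suc.prems by simp
    from inc[OF this] m1 have "\<bar>f (u + real m * h / 2 ^ Suc n) - f (u + real (2*q) * h / 2 ^ Suc n)\<bar> \<le> \<delta> (Suc n)"
      by simp
    with IH show ?thesis by simp
  qed
qed

lemma dyadic_osc:
  fixes f :: "real \<Rightarrow> real" and \<delta> :: "nat \<Rightarrow> real"
  assumes h: "h > 0" and cont: "continuous_on {u..u+h} f"
    and inc: "\<And>n k. k < 2^n \<Longrightarrow> \<bar>f (u + real (k+1) * h / 2^n) - f (u + real k * h / 2^n)\<bar> \<le> \<delta> n"
    and sm: "summable \<delta>" and v: "v \<in> {u..u+h}"
  shows "\<bar>f v - f u\<bar> \<le> suminf \<delta>"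
proof -
  have d0: "\<delta> n \<ge> 0" for n using inc[of 0 n] by (meson abs_ge_zero order_trans zero_less_numeral zero_less_power)
  define x where "x = (v - u) / h"
  have x: "0 \<le> x" "x \<le> 1" using v h unfolding x_def by auto
  define m where "m n = nat \<lfloor>x * 2^n\<rfloor>" for n :: nat
  define p where "p n = u + real (m n) * h / 2^n" for n :: nat
  have fl: "real (m n) = of_int \<lfloor>x * 2^n\<rfloor>" for n unfolding m_def using x by simp
  have mle: "m n \<le> 2^n" for n
  proof -
    have "\<lfloor>x * 2^n\<rfloor> \<le> \<lfloor>(2::real)^n\<rfloor>" using x by (intro floor_mono) simp
    then show ?thesis unfolding m_def by (simp add: nat_le_iff)
  qed
  have pb: "\<bar>f (p n) - f u\<bar> \<le> suminf \<delta>" for n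
  proof -
    have "\<bar>f (p n) - f u\<bar> \<le> (\<Sum>j\<le>n. \<delta> j)" unfolding p_def by (rule dyadic_chain[OF inc mle])
    also have "\<dots> \<le> suminf \<delta>" using sm d0 by (auto intro!: sum_le_suminf)
    finally show ?thesis .
  qed
  have up: "p n \<le> v" for n
  proof -
    have "real (m n) \<le> x * 2^n" unfolding fl by simp
    then have "real (m n) / 2^n \<le> x" by (simp add: divide_le_eq)
    then have "real (m n) / 2^n * h \<le> x * h" using h by (intro mult_right_mono) auto
    then show ?thesis unfolding p_def x_def using h by simp
  qed
  have lo: "v - h / 2^n \<le> p n" for n
  proof -
    have "x * 2^n - 1 \<le> real (m n)" unfolding fl by linarith
    then have "(x * 2^n - 1) / 2^n \<le> real (m n) / 2^n" by (intro divide_right_mono) auto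
    then have "x - 1 / 2^n \<le> real (m n) / 2^n" by (simp add: diff_divide_distrib)
    then have "(x - 1 / 2^n) * h \<le> real (m n) / 2^n * h" using h by (intro mult_right_mono) auto
    moreover have "(x - 1/2^n)*h = v - u - h/2^n" using h unfolding x_def by (simp add: field_simps)
    moreover have "real (m n)/2^n*h = real (m n)*h/2^n" by simp
    ultimately show ?thesis unfolding p_def by linarith
  qed
  have pu: "p n \<ge> u" for n unfolding p_def using h by simp
  have lim: "p \<longlonglongrightarrow> v"
  proof (rule tendsto_sandwich[of "\<lambda>n. v - h / 2^n" _ _ "\<lambda>n. v"])
    show "\<forall>\<^sub>F n in sequentially. v - h / 2 ^ n \<le> p n" using lo by simp
    show "\<forall>\<^sub>F n in sequentially. p n \<le> v" using up by simp
    have "(\<lambda>n. h / 2^n :: real) \<longlonglongrightarrow> 0"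
      by (intro tendsto_divide_0[OF tendsto_const]) (simp add: filterlim_realpow_sequentially_gt1)
    then show "(\<lambda>n. v - h / 2 ^ n) \<longlonglongrightarrow> v" using tendsto_diff[OF tendsto_const[of v]] by force
  qed simp
  have pin: "p n \<in> {u..u+h}" for n using up[of n] pu[of n] v by auto
  have "(\<lambda>n. f (p n)) \<longlonglongrightarrow> f v"
    by (rule continuous_on_tendsto_compose[OF cont lim v]) (use pin in \<open>auto intro: always_eventually\<close>)
  then have "(\<lambda>n. \<bar>f (p n) - f u\<bar>) \<longlonglongrightarrow> \<bar>f v - f u\<bar>" by (intro tendsto_intros)
  then show ?thesis using pb by (intro tendsto_le[OF _ tendsto_const]) auto
qed

definition osc_set :: "'a measure \<Rightarrow> (real \<Rightarrow> 'a \<Rightarrow> real) \<Rightarrow> real \<Rightarrow> real \<Rightarrow> real \<Rightarrow> 'a set" where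
  "osc_set M W u h D = {\<omega> \<in> space M. \<exists>n. \<exists>k<(2::nat)^n.
      D/4*(3/4)^n < \<bar>W (u + real (k+1) * h / 2^n) \<omega> - W (u + real k * h / 2^n) \<omega>\<bar>}"

lemma osc_set_det:
  assumes "\<omega> \<notin> osc_set M W u h D" "\<omega> \<in> space M" "h > 0"
    and "continuous_on {u..u+h} (\<lambda>t. W t \<omega>)" "v \<in> {u..u+h}"
  shows "\<bar>W v \<omega> - W u \<omega>\<bar> \<le> D"
proof -
  have sm: "summable (\<lambda>n. D/4*(3/4::real)^n)" by (intro summable_mult summable_geometric) simp
  have "suminf (\<lambda>n. D/4*(3/4::real)^n) = D/4 * (1 / (1 - 3/4))"
    by (subst suminf_mult) (auto simp: suminf_geometric)
  also have "\<dots> = D" by simp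
  finally have s: "suminf (\<lambda>n. D/4*(3/4::real)^n) = D" .
  have "\<bar>W v \<omega> - W u \<omega>\<bar> \<le> suminf (\<lambda>n. D/4*(3/4::real)^n)"
  proof (rule dyadic_osc[where f="\<lambda>t. W t \<omega>"])
    show "\<bar>W (u + real (k + 1) * h / 2 ^ n) \<omega> - W (u + real k * h / 2 ^ n) \<omega>\<bar> \<le> D/4*(3/4)^n"
      if "k < 2^n" for n k
    proof -
      from assms(1,2) that have "\<not> (D/4*(3/4)^n < \<bar>W (u + real (k + 1) * h / 2 ^ n) \<omega> - W (u + real k * h / 2 ^ n) \<omega>\<bar>)"
        unfolding osc_set_def by blast
      then show ?thesis by linarith
    qed
  qed (use assms sm in auto)
  then show ?thesis using s by simp
qed

lemma osc_set_meas:
  assumes "standard_BM M W" "u \<ge> 0" "h > 0"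
  shows "osc_set M W u h D \<in> sets M"
proof -
  have [measurable]: "W t \<in> borel_measurable M" if "t \<ge> 0" for t using bm_meas assms that by auto
  have pos: "u + real k * h / 2^n \<ge> 0" for k n using assms by simp
  have pos2: "u + real (k+1) * h / 2^n \<ge> 0" for k n using assms by simp
  have eq: "osc_set M W u h D = (\<Union>n. \<Union>k\<in>{..<(2::nat)^n}. {\<omega> \<in> space M.
      D/4*(3/4)^n < \<bar>W (u + real (k+1) * h / 2^n) \<omega> - W (u + real k * h / 2^n) \<omega>\<bar>})"
    unfolding osc_set_def by auto
  show ?thesis unfolding eq
    using pos pos2 by (intro sets.countable_UN sets.finite_UN) (auto intro!: sets.sets_Collect_countable_Ex)
qed

lemma osc_bound:
  assumes bm: "standard_BM M W" and u: "u \<ge> 0" and h: "h > 0" and D: "D > 0"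
    and r: "16 \<le> D\<^sup>2 / (32 * h)"
  shows "measure M (osc_set M W u h D) \<le> 6 * exp (- (D\<^sup>2 / (32 * h)))"
proof -
  define r where "r = D\<^sup>2 / (32 * h)"
  have r16: "16 \<le> r" using r unfolding r_def .
  have ps: "prob_space M" using bm unfolding standard_BM_def by auto
  then have fm: "finite_measure M" by (simp add: prob_space_def)
  have [measurable]: "W t \<in> borel_measurable M" if "t \<ge> 0" for t using bm_meas bm that by auto
  define B where "B n = (\<Union>k\<in>{..<(2::nat)^n}. {\<omega> \<in> space M.
      D/4*(3/4)^n \<le> \<bar>W (u + real (k+1) * h / 2^n) \<omega> - W (u + real k * h / 2^n) \<omega>\<bar>})" for n
  have Bs: "B n \<in> sets M" for n unfolding B_def using u h
    by (intro sets.finite_UN) (auto intro!: sets.sets_Collect_countable_Ex)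
  define q where "q = 2 * exp (- r / 8)"
  have q0: "0 \<le> q" unfolding q_def by simp
  have "exp (- r / 8) \<le> exp (-2)" using r16 by simp
  also have "exp (-2::real) = 1 / exp 2" by (simp add: exp_minus field_simps)
  also have "\<dots> \<le> 1 / 3" using exp_ge_add_one_self[of "2::real"] by (simp add: divide_le_eq)
  finally have q1: "q \<le> 2/3" unfolding q_def by simp
  define g where "g n = 2 * exp (- r) * q^n" for n
  have Bb: "measure M (B n) \<le> g n" for n
  proof -
    have "measure M (B n) \<le> (\<Sum>k\<in>{..<(2::nat)^n}. measure M {\<omega> \<in> space M.
      D/4*(3/4)^n \<le> \<bar>W (u + real (k+1) * h / 2^n) \<omega> - W (u + real k * h / 2^n) \<omega>\<bar>})"
      unfolding B_def using u h by (intro measure_UNION_le) (auto intro!: sets.sets_Collect_countable_Ex)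
    also have "\<dots> \<le> (\<Sum>k\<in>{..<(2::nat)^n}. 2 * exp (- (D/4*(3/4)^n)\<^sup>2 / (2 * ((u + real (k+1) * h / 2^n) - (u + real k * h / 2^n)))))"
      using u h D by (intro sum_mono bm_tail_abs[OF bm]) (auto simp: divide_strict_right_mono)
    also have "\<dots> = 2^n * (2 * exp (- r * (9/8)^n))"
    proof -
      have "(u + real (k+1) * h / 2^n) - (u + real k * h / 2^n) = h / 2^n" for k
        by (simp add: field_simps)
      moreover have "(D/4*(3/4)^n)\<^sup>2 / (2 * (h / 2^n)) = r * (9/8)^n"
        unfolding r_def using h by (simp add: field_simps power2_eq_square power_mult_distrib[symmetric])
      ultimately show ?thesis by simp
    qed
    also have "\<dots> \<le> g n"
    proof -
      have "1 + real n * (1/8) \<le> (1 + 1/8 :: real)^n" by (rule Bernoulli_inequality) simp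
      then have "r * (1 + real n / 8) \<le> r * (9/8)^n" using r16 by (intro mult_left_mono) auto
      then have "exp (- r * (9/8)^n) \<le> exp (- r + real n * (- r / 8))" by (simp add: algebra_simps)
      also have "\<dots> = exp (- r) * exp (- r / 8) ^ n" by (simp only: exp_add exp_of_nat_mult)
      finally have "2^n * (2 * exp (- r * (9/8)^n)) \<le> 2^n * (2 * (exp (- r) * exp (- r / 8) ^ n))"
        by simp
      also have "\<dots> = g n" unfolding g_def q_def by (simp add: power_mult_distrib)
      finally show ?thesis .
    qed
    finally show ?thesis .
  qed
  have sg: "summable g" unfolding g_def using q0 q1 by (intro summable_mult summable_geometric) auto
  have sB: "summable (\<lambda>n. measure M (B n))"
    by (rule summable_comparison_test'[OF sg]) (use Bb in auto)
  have "osc_set M W u h D \<subseteq> (\<Union>n. B n)" unfolding osc_set_def B_def by (force simp: less_imp_le)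
  then have "measure M (osc_set M W u h D) \<le> measure M (\<Union>n. B n)"
    using Bs by (intro finite_measure.finite_measure_mono[OF fm]) auto
  also have "\<dots> \<le> (\<Sum>n. measure M (B n))"
    using Bs sB by (intro finite_measure.finite_measure_subadditive_countably[OF fm]) auto
  also have "\<dots> \<le> suminf g" by (rule suminf_le[OF Bb sB sg])
  also have "suminf g = 2 * exp (- r) * (1 / (1 - q))"
    unfolding g_def using q0 q1 by (subst suminf_mult) (auto simp: suminf_geometric)
  also have "\<dots> \<le> 2 * exp (- r) * 3"
    using q0 q1 by (intro mult_left_mono) (auto simp: divide_le_eq)
  finally show ?thesis unfolding r_def by simp
qed

lemma first_hit:
  fixes f :: "real \<Rightarrow> real"
  assumes c: "continuous_on {0..} f" and ne: "{t. 0 \<le> t \<and> f t = z} \<noteq> {}"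
  shows "Inf {t. 0 \<le> t \<and> f t = z} \<in> {t. 0 \<le> t \<and> f t = z}"
    "Inf (ereal ` {t. 0 \<le> t \<and> f t = z}) = ereal (Inf {t. 0 \<le> t \<and> f t = z})"
proof -
  have eq: "{t. 0 \<le> t \<and> f t = z} = {0..} \<inter> f -` {z}" by auto
  have cl: "closed {t. 0 \<le> t \<and> f t = z}" unfolding eq
    by (rule continuous_closed_preimage[OF c]) auto
  have bb: "bdd_below {t. 0 \<le> t \<and> f t = z}" by (rule bdd_belowI[of _ 0]) auto
  show "Inf {t. 0 \<le> t \<and> f t = z} \<in> {t. 0 \<le> t \<and> f t = z}"
    by (rule closed_contains_Inf[OF ne bb cl])
  show "Inf (ereal ` {t. 0 \<le> t \<and> f t = z}) = ereal (Inf {t. 0 \<le> t \<and> f t = z})"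
    using ereal_Inf'[OF bb ne] by simp
qed

lemma stay_above:
  fixes f :: "real \<Rightarrow> real"
  assumes c: "continuous_on {0..} f" and f0: "z < f 0" and t: "0 \<le> t"
    and le: "ereal t \<le> Inf (ereal ` {t. 0 \<le> t \<and> f t = z})"
  shows "z \<le> f t"
proof (rule ccontr)
  assume "\<not> z \<le> f t"
  then have "f t \<le> z" by simp
  moreover have "continuous_on {0..t} f" using c by (rule continuous_on_subset) auto
  ultimately obtain s where s: "0 \<le> s" "s \<le> t" "f s = z" using IVT2'[of f t z 0] f0 t by force
  have "s \<noteq> t" using s \<open>\<not> z \<le> f t\<close> by auto
  then have "s < t" using s by simp
  have "Inf (ereal ` {t. 0 \<le> t \<and> f t = z}) \<le> ereal s" using s by (intro INF_lower) auto
  with le have "ereal t \<le> ereal s" by (rule order_trans)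
  with \<open>s < t\<close> show False by simp
qed

lemma L_flat:
  fixes l q :: "real \<Rightarrow> real"
  assumes mono: "mono_on {0..} l" and cad: "cadlag_on_nonneg l"
    and int0: "(\<integral>\<^sup>+ t. indicator {t. 0 \<le> t \<and> q t < 0} t \<partial>interval_measure (\<lambda>t. l (max 0 t))) = 0"
    and ab: "0 \<le> a" "a < b" and neg: "\<And>t. t \<in> {a<..b} \<Longrightarrow> q t < 0"
  shows "l b = l a"
proof -
  define F where "F t = l (max 0 t)" for t
  have Fm: "F x \<le> F y" if "x \<le> y" for x y
    unfolding F_def using mono that by (auto simp: mono_on_def)
  have Fr: "continuous (at_right x) F" for x
  proof (cases "0 \<le> x")
    case True
    have "continuous (at_right x) l" using cad True unfolding cadlag_on_nonneg_def by auto
    then have "(l \<longlongrightarrow> l x) (at_right x)" by (simp add: continuous_within)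
    moreover have "\<forall>\<^sub>F t in at_right x. l t = F t"
      using eventually_at_right_less[of x] by eventually_elim (use True in \<open>auto simp: F_def\<close>)
    ultimately have "(F \<longlongrightarrow> l x) (at_right x)" by (rule Lim_transform_eventually)
    then have "(F \<longlongrightarrow> F x) (at_right x)" using True by (simp add: F_def)
    then show ?thesis by (simp add: continuous_within)
  next
    case False
    have "\<forall>\<^sub>F t in at_right x. t < 0" using False unfolding eventually_at_right_field by (intro exI[of _ 0]) auto
    then have "\<forall>\<^sub>F t in at_right x. F x = F t" by eventually_elim (use False in \<open>auto simp: F_def\<close>)
    then have "(F \<longlongrightarrow> F x) (at_right x)" by (rule tendsto_eventually[OF eventually_mono]) auto
    then show ?thesis by (simp add: continuous_within)
  qed
  have "ennreal (F b - F a) = emeasure (interval_measure F) {a<..b}"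
    using ab Fm Fr by (intro emeasure_interval_measure_Ioc[symmetric]) auto
  also have "\<dots> = (\<integral>\<^sup>+ t. indicator {a<..b} t \<partial>interval_measure F)"
    by simp
  also have "\<dots> \<le> (\<integral>\<^sup>+ t. indicator {t. 0 \<le> t \<and> q t < 0} t \<partial>interval_measure F)"
    using neg ab by (intro nn_integral_mono) (auto split: split_indicator)
  also have "\<dots> = 0" using int0 unfolding F_def by simp
  finally have "ennreal (F b - F a) \<le> 0" .
  then have "F b \<le> F a" by (simp add: ennreal_eq_0_iff)
  moreover have "F a \<le> F b" using Fm ab by simp
  ultimately show ?thesis using ab unfolding F_def by simp
qed

lemma path_lemma:
  fixes q1 q2 l w :: "real \<Rightarrow> real" and \<beta> y T :: real
  assumes bp: "\<beta> > 0" and yp: "y > 0" and T0: "T \<ge> 0"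
    and c1: "continuous_on {0..} q1" and c2: "continuous_on {0..} q2"
    and e1: "\<forall>t\<ge>0. q1 t = 0 + sqrt 2 * w t - \<beta> * t + integral {0..t} (\<lambda>s. - q1 s + q2 s) - l t"
    and e2: "\<forall>t\<ge>0. q2 t = y + \<beta> + l t - integral {0..t} (\<lambda>s. q2 s)"
    and w0: "w 0 = 0" and l0: "l 0 = 0"
    and mono: "mono_on {0..} l" and cad: "cadlag_on_nonneg l"
    and neg: "\<forall>t\<ge>0. q1 t \<le> 0"
    and int0: "(\<integral>\<^sup>+ t. indicator {t. 0 \<le> t \<and> q1 t < 0} t \<partial>interval_measure (\<lambda>t. l (max 0 t))) = 0"
    and hit: "Inf (ereal ` {t. 0 \<le> t \<and> q1 t = - \<beta> / 2}) \<le> Inf (ereal ` {t. 0 \<le> t \<and> q2 t = y / 2 + \<beta>})"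
  shows "(\<exists>s t. 0 \<le> s \<and> s < t \<and> t \<le> T \<and> (\<beta> + y * (t - s)) / 3 \<le> w s - w t)
         \<or> \<beta> * T / 2 - y / 2 - \<beta> / 2 < sqrt 2 * w T"
proof -
  define S1 where "S1 = {t. 0 \<le> t \<and> q1 t = - \<beta> / 2}"
  define S2 where "S2 = {t. 0 \<le> t \<and> q2 t = y / 2 + \<beta>}"
  define \<tau>1 where "\<tau>1 = Inf (ereal ` S1)"
  define \<tau>2 where "\<tau>2 = Inf (ereal ` S2)"
  have hit': "\<tau>1 \<le> \<tau>2" using hit unfolding \<tau>1_def \<tau>2_def S1_def S2_def .
  have q10: "q1 0 = 0" using e1 w0 l0 by simp
  have q20: "q2 0 = y + \<beta>" using e2 l0 by simp
  have cI: "continuous_on {a..b} q1" "continuous_on {a..b} q2" if "0 \<le> a" for a b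
    using c1 c2 that by (auto intro: continuous_on_subset)
  have q2ab: "y / 2 + \<beta> \<le> q2 t" if "0 \<le> t" "ereal t \<le> \<tau>2" for t
    using stay_above[OF c2, of "y/2+\<beta>" t] q20 yp that unfolding \<tau>2_def S2_def by simp
  have q1ab: "- \<beta> / 2 \<le> q1 t" if "0 \<le> t" "ereal t \<le> \<tau>1" for t
    using stay_above[OF c1, of "-\<beta>/2" t] q10 bp that unfolding \<tau>1_def S1_def by simp
  show ?thesis
  proof (cases "\<tau>1 \<le> ereal T")
    case True
    have ne: "S1 \<noteq> {}"
    proof
      assume "S1 = {}" then have "\<tau>1 = \<infinity>" unfolding \<tau>1_def by (simp add: top_ereal_def)
      with True show False by simp
    qed
    define t1 where "t1 = Inf S1"
    have t1: "0 \<le> t1" "q1 t1 = - \<beta> / 2" and tau1: "\<tau>1 = ereal t1"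
      using first_hit[OF c1 ne[unfolded S1_def]] unfolding t1_def \<tau>1_def S1_def by auto
    have t1T: "t1 \<le> T" using True tau1 by simp
    define Z where "Z = {t. 0 \<le> t \<and> t \<le> t1 \<and> q1 t = 0}"
    have Zeq: "Z = {0..t1} \<inter> q1 -` {0}" unfolding Z_def by auto
    have Zcl: "closed Z" unfolding Zeq by (rule continuous_closed_preimage[OF cI(1)]) auto
    have Zne: "Z \<noteq> {}" using q10 t1 unfolding Z_def by auto
    have Zbdd: "bdd_above Z" unfolding Z_def by (rule bdd_aboveI[of _ t1]) auto
    define \<sigma> where "\<sigma> = Sup Z"
    have \<sigma>Z: "\<sigma> \<in> Z" unfolding \<sigma>_def by (rule closed_contains_Sup[OF Zne Zbdd Zcl])
    then have \<sigma>: "0 \<le> \<sigma>" "\<sigma> \<le> t1" "q1 \<sigma> = 0" unfolding Z_def by auto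
    have \<sigma>t1: "\<sigma> < t1" using \<sigma> t1 bp by (cases "\<sigma> = t1") auto
    have negI: "q1 t < 0" if "t \<in> {\<sigma><..t1}" for t
    proof -
      have "q1 t \<le> 0" using neg that \<sigma> by auto
      moreover have "q1 t \<noteq> 0"
      proof
        assume "q1 t = 0"
        then have "t \<in> Z" using that \<sigma> unfolding Z_def by auto
        then have "t \<le> \<sigma>" unfolding \<sigma>_def by (rule cSup_upper[OF _ Zbdd])
        with that show False by simp
      qed
      ultimately show ?thesis by simp
    qed
    have lf: "l t1 = l \<sigma>" by (rule L_flat[OF mono cad int0 \<sigma>(1) \<sigma>t1 negI])
    define g where "g s = - q1 s + q2 s" for s
    have gc: "continuous_on {0..t1} g" unfolding g_def using cI by (intro continuous_intros) auto
    have gi: "g integrable_on {0..t1}" by (rule integrable_continuous_interval[OF gc])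
    have comb: "integral {0..\<sigma>} g + integral {\<sigma>..t1} g = integral {0..t1} g"
      by (rule Henstock_Kurzweil_Integration.integral_combine[OF \<sigma>(1) \<sigma>(2) gi])
    have gi2: "g integrable_on {\<sigma>..t1}"
      by (rule integrable_continuous_interval) (use gc \<sigma> in \<open>auto intro: continuous_on_subset\<close>)
    have "integral {\<sigma>..t1} (\<lambda>_. y / 2 + \<beta>) \<le> integral {\<sigma>..t1} g"
    proof (rule integral_le[OF _ gi2])
      show "(\<lambda>_. y / 2 + \<beta>) integrable_on {\<sigma>..t1}" by (rule integrable_continuous_interval) (rule continuous_on_const)
      fix s assume s: "s \<in> {\<sigma>..t1}"
      have "ereal s \<le> \<tau>2" using s hit' tau1 by (metis atLeastAtMost_iff ereal_less_eq(3) order_trans)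
      then have "y/2 + \<beta> \<le> q2 s" using q2ab s \<sigma> by auto
      moreover have "q1 s \<le> 0" using neg s \<sigma> by auto
      ultimately show "y / 2 + \<beta> \<le> g s" unfolding g_def by simp
    qed
    then have J: "(t1 - \<sigma>) * (y / 2 + \<beta>) \<le> integral {\<sigma>..t1} g" using \<sigma>t1 by simp
    have E1: "q1 t1 = sqrt 2 * w t1 - \<beta> * t1 + integral {0..t1} g - l t1"
      using e1 t1 unfolding g_def by simp
    have E0: "q1 \<sigma> = sqrt 2 * w \<sigma> - \<beta> * \<sigma> + integral {0..\<sigma>} g - l \<sigma>"
      using e1 \<sigma> unfolding g_def by simp
    define D where "D = w \<sigma> - w t1"
    have A: "- \<beta> / 2 = sqrt 2 * w t1 - \<beta> * t1 + integral {0..t1} g - l \<sigma>" using E1 t1(2) lf by simp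
    have B: "0 = sqrt 2 * w \<sigma> - \<beta> * \<sigma> + integral {0..\<sigma>} g - l \<sigma>" using E0 \<sigma>(3) by simp
    have C: "sqrt 2 * D = sqrt 2 * w \<sigma> - sqrt 2 * w t1" unfolding D_def by (simp add: right_diff_distrib)
    have J': "y * (t1 - \<sigma>) / 2 + \<beta> * t1 - \<beta> * \<sigma> \<le> integral {\<sigma>..t1} g" using J by (simp add: algebra_simps)
    have key: "(\<beta> + y * (t1 - \<sigma>)) / 2 \<le> sqrt 2 * D"
      using A B C J' comb by argo
    have Xp: "0 < \<beta> + y * (t1 - \<sigma>)" using bp yp \<sigma>t1 by (simp add: add_pos_nonneg)
    have Dp: "0 \<le> D"
    proof -
      have "0 < (\<beta> + y * (t1 - \<sigma>)) / 2" using Xp by simp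
      then have "0 < sqrt 2 * D" using key by (rule less_le_trans)
      then show ?thesis by (simp add: zero_less_mult_iff)
    qed
    have s2: "sqrt 2 \<le> 3 / 2" by (rule real_le_lsqrt) (auto simp: power2_eq_square)
    have "sqrt 2 * D \<le> 3 / 2 * D" by (rule mult_right_mono[OF s2 Dp])
    then have "(\<beta> + y * (t1 - \<sigma>)) / 3 \<le> D" using key by linarith
    then show ?thesis unfolding D_def using \<sigma> \<sigma>t1 t1T by blast
  next
    case False
    then have Tl: "ereal T < \<tau>1" by simp
    have q1b: "- \<beta> / 2 \<le> q1 t" if "0 \<le> t" "t \<le> T" for t
      using q1ab[OF that(1)] Tl that by (metis ereal_less_eq(3) less_imp_le order_trans)
    have "y / 2 + \<beta> \<le> q2 T" using q2ab[OF T0] Tl hit' by simp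
    moreover have "q2 T \<noteq> y / 2 + \<beta>"
    proof
      assume "q2 T = y / 2 + \<beta>"
      then have "\<tau>2 \<le> ereal T" unfolding \<tau>2_def S2_def using T0 by (intro INF_lower) auto
      with Tl hit' show False by simp
    qed
    ultimately have q2T: "y / 2 + \<beta> < q2 T" by simp
    have i1: "q1 integrable_on {0..T}" "q2 integrable_on {0..T}"
      using cI by (auto intro!: integrable_continuous_interval)
    have "integral {0..T} (\<lambda>_. - \<beta> / 2) \<le> integral {0..T} q1"
      by (rule integral_le) (use i1 q1b in auto)
    then have I1: "- \<beta> / 2 * T \<le> integral {0..T} q1" using T0 by (simp add: mult.commute)
    have "integral {0..T} (\<lambda>s. - q1 s + q2 s) = - integral {0..T} q1 + integral {0..T} q2"
      using i1 by (simp add: Henstock_Kurzweil_Integration.integral_diff)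
    then have E1: "q1 T = sqrt 2 * w T - \<beta> * T - integral {0..T} q1 + integral {0..T} q2 - l T"
      using e1 T0 by simp
    have E2: "q2 T = y + \<beta> + l T - integral {0..T} q2" using e2 T0 by simp
    have "- \<beta> / 2 \<le> q1 T" using q1b[OF T0] by simp
    then have "\<beta> * T / 2 - y / 2 - \<beta> / 2 < sqrt 2 * w T" using E1 E2 I1 q2T by (simp add: algebra_simps)
    then show ?thesis by blast
  qed
qed

lemma grid_lemma:
  fixes w :: "real \<Rightarrow> real" and a b h T s t :: real and N :: nat
  assumes a: "a > 0" and b: "b \<ge> 0" and h: "h > 0" and bh: "b * h \<le> a / 4" and TN: "T \<le> real N * h"
    and osc: "\<And>i v. i \<le> N \<Longrightarrow> v \<in> {real i * h .. real i * h + h} \<Longrightarrow> \<bar>w v - w (real i * h)\<bar> \<le> a / 8"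
    and st: "0 \<le> s" "s < t" "t \<le> T" and dd: "a + b * (t - s) \<le> w s - w t"
  shows "\<exists>i\<le>N. \<exists>k\<in>{1..N}. a / 2 + b * (real k * h) \<le> w (real i * h) - w (real (i + k) * h)"
proof -
  define i where "i = nat \<lfloor>s / h\<rfloor>"
  define j where "j = nat \<lfloor>t / h\<rfloor>"
  have sh: "0 \<le> s / h" "0 \<le> t / h" using st h by auto
  have ri: "real i = of_int \<lfloor>s / h\<rfloor>" unfolding i_def using sh by simp
  have rj: "real j = of_int \<lfloor>t / h\<rfloor>" unfolding j_def using sh by simp
  have i1: "real i * h \<le> s" "s < real i * h + h"
  proof -
    have "real i \<le> s / h" "s / h < real i + 1" unfolding ri by linarith+
    then show "real i * h \<le> s" "s < real i * h + h" using h by (auto simp: field_simps)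
  qed
  have j1: "real j * h \<le> t" "t < real j * h + h"
  proof -
    have "real j \<le> t / h" "t / h < real j + 1" unfolding rj by linarith+
    then show "real j * h \<le> t" "t < real j * h + h" using h by (auto simp: field_simps)
  qed
  have jN: "j \<le> N"
  proof -
    have "t / h \<le> real N" using st TN h by (simp add: divide_le_eq)
    then have "\<lfloor>t / h\<rfloor> \<le> int N" by (simp add: floor_le_iff)
    then show ?thesis unfolding j_def by simp
  qed
  have ij: "i \<le> j"
  proof -
    have "\<lfloor>s / h\<rfloor> \<le> \<lfloor>t / h\<rfloor>" using st h by (intro floor_mono divide_right_mono) auto
    then show ?thesis unfolding i_def j_def by simp
  qed
  have iN: "i \<le> N" using ij jN by simp
  have os: "\<bar>w s - w (real i * h)\<bar> \<le> a / 8" using osc[OF iN] i1 by simp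
  have ot: "\<bar>w t - w (real j * h)\<bar> \<le> a / 8" using osc[OF jN] j1 by simp
  have main: "3 * a / 4 + b * (t - s) \<le> w (real i * h) - w (real j * h)" using os ot dd by linarith
  have bts: "0 \<le> b * (t - s)" using b st by simp
  have "i \<noteq> j"
  proof
    assume "i = j" then show False using main a bts by simp
  qed
  then have ij2: "i < j" using ij by simp
  define k where "k = j - i"
  have k: "1 \<le> k" "k \<le> N" "i + k = j" using ij2 jN unfolding k_def by auto
  have "real (k - 1) * h \<le> t - s"
  proof -
    have e: "real (k - 1) = real j - real i - 1" using ij2 unfolding k_def by (simp add: of_nat_diff)
    have "real (k - 1) * h = (real j - real i - 1) * h" unfolding e by simp
    also have "\<dots> = real j * h - real i * h - h" by (simp add: left_diff_distrib)
    finally have "real (k - 1) * h = real j * h - real i * h - h" .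
    then show ?thesis using i1 j1 by linarith
  qed
  then have X1: "b * (real (k - 1) * h) \<le> b * (t - s)" using b by (intro mult_left_mono)
  have X2: "b * (real (k - 1) * h) = b * (real k * h) - b * h"
  proof -
    have "real (k - 1) = real k - 1" using k by (simp add: of_nat_diff)
    then show ?thesis by (simp add: algebra_simps)
  qed
  have X3: "b * (real k * h) - b * h \<le> b * (t - s)" using X1 unfolding X2 .
  have X4: "a / 2 + b * (real k * h) \<le> 3 * a / 4 + b * (t - s)" using X3 bh by linarith
  have X5: "a / 2 + b * (real k * h) \<le> w (real i * h) - w (real j * h)"
    using X4 main by (rule order_trans)
  have "real (i + k) = real j" using k(3) by simp
  then have "a / 2 + b * (real k * h) \<le> w (real i * h) - w (real (i + k) * h)"
    using X5 by (simp only: of_nat_add[symmetric])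
  then show ?thesis using iN k(1,2) by (intro exI[of _ i] conjI bexI[of _ k]) auto
qed

lemma pair_tail_arith:
  fixes a b x :: real
  assumes "x > 0" "a \<ge> 0" "b \<ge> 0"
  shows "(a / 2 + b * x)\<^sup>2 / (2 * x) \<ge> 3 * a * b / 4 + b\<^sup>2 * x / 4"
proof -
  have "(a / 2 + b * x)\<^sup>2 - 2 * x * (3 * a * b / 4 + b\<^sup>2 * x / 4) = (a / 2 - b * x / 2)\<^sup>2 + b\<^sup>2 * x\<^sup>2 / 4"
    by (simp add: power2_eq_square algebra_simps)
  also have "\<dots> \<ge> 0" by simp
  finally have "2 * x * (3 * a * b / 4 + b\<^sup>2 * x / 4) \<le> (a / 2 + b * x)\<^sup>2" by simp
  then show ?thesis using assms by (simp add: le_divide_eq mult.commute)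
qed

lemma geom_half: "(\<Sum>k\<in>{1..n}. (1/2::real)^k) \<le> 1"
proof -
  have "(\<Sum>k\<in>{1..n}. (1/2::real)^k) = 1 - (1/2)^n"
    by (induction n) (auto simp: field_simps)
  then show ?thesis by simp
qed

lemma exp_neg_nat_half: "exp (- real k) \<le> (1/2::real)^k"
proof -
  have "exp (-1::real) \<le> 1/2"
  proof -
    have "2 \<le> exp (1::real)" using exp_ge_add_one_self[of "1::real"] by simp
    then show ?thesis by (simp add: exp_minus field_simps)
  qed
  then have "exp (-1::real) ^ k \<le> (1/2)^k" by (intro power_mono) auto
  moreover have "exp (- real k) = exp (-1::real) ^ k" using exp_of_nat_mult[of k "-1::real"] by simp
  ultimately show ?thesis by simp
qed

lemma prob_part:
  fixes M :: "'a measure" and \<beta> y :: real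
  assumes bm: "standard_BM M W" and rs: "reflected_solution M \<beta> 0 (y + \<beta>) W Q1 Q2 L"
    and bp: "\<beta> > 0" and yp: "y > 0" and xK: "165888 \<le> \<beta> * y"
  shows "measure M {\<omega> \<in> space M. hit_time Q1 (- \<beta> / 2) \<omega> \<le> hit_time Q2 (y / 2 + \<beta>) \<omega>}
    \<le> exp (- (\<beta> * y) / 36) + (real (nat \<lceil>(2 * (y + \<beta>) / \<beta>) / (\<beta> / (4608 * y))\<rceil>) + 1)
        * (6 * exp (- (\<beta> * y) / 4) + exp (- (\<beta> * y) / 12))"
proof -
  define h where "h = \<beta> / (4608 * y)"
  define T where "T = 2 * (y + \<beta>) / \<beta>"
  define N where "N = nat \<lceil>T / h\<rceil>"
  define x where "x = \<beta> * y"
  define a where "a = \<beta> / 3"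
  define b where "b = y / 3"
  have hp: "h > 0" unfolding h_def using bp yp by simp
  have Tp: "T \<ge> 0" unfolding T_def using bp yp by simp
  have TN: "T \<le> real N * h"
  proof -
    have "T / h \<le> real N" unfolding N_def by linarith
    then show ?thesis using hp by (simp add: divide_le_eq)
  qed
  have ap: "a > 0" unfolding a_def using bp by simp
  have bp': "b \<ge> 0" unfolding b_def using yp by simp
  have bh: "b * h \<le> a / 4" unfolding a_def b_def h_def using bp yp by (simp add: field_simps)
  have ps: "prob_space M" using bm unfolding standard_BM_def by auto
  then have fm: "finite_measure M" by (simp add: prob_space_def)
  have [measurable]: "W t \<in> borel_measurable M" if "t \<ge> 0" for t using bm_meas bm that by auto
  have ae1: "AE \<omega> in M. W 0 \<omega> = 0 \<and> continuous_on {0..} (\<lambda>t. W t \<omega>)"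
    using bm unfolding standard_BM_def by auto
  note ae2 = rs[unfolded reflected_solution_def]
  define Pgood where "Pgood \<omega> \<longleftrightarrow> (W 0 \<omega> = 0 \<and> continuous_on {0..} (\<lambda>t. W t \<omega>)) \<and>
        continuous_on {0..} (\<lambda>t. Q1 t \<omega>) \<and>
        continuous_on {0..} (\<lambda>t. Q2 t \<omega>) \<and>
        (\<forall>t\<ge>0. Q1 t \<omega> = 0 + sqrt 2 * W t \<omega> - \<beta> * t
                   + integral {0..t} (\<lambda>s. - Q1 s \<omega> + Q2 s \<omega>) - L t \<omega>) \<and>
        (\<forall>t\<ge>0. Q2 t \<omega> = y + \<beta> + L t \<omega> - integral {0..t} (\<lambda>s. Q2 s \<omega>)) \<and>
        L 0 \<omega> = 0 \<and>
        mono_on {0..} (\<lambda>t. L t \<omega>) \<and>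
        (\<forall>t\<ge>0. 0 \<le> L t \<omega>) \<and>
        cadlag_on_nonneg (\<lambda>t. L t \<omega>) \<and>
        (\<forall>t\<ge>0. Q1 t \<omega> \<le> 0) \<and>
        (\<integral>\<^sup>+ t. indicator {t. 0 \<le> t \<and> Q1 t \<omega> < 0} t
            \<partial>interval_measure (\<lambda>t. L (max 0 t) \<omega>)) = 0" for \<omega>
  from ae1 ae2 have "AE \<omega> in M. Pgood \<omega>" unfolding Pgood_def
    by eventually_elim auto
  then obtain N0 where N0: "{\<omega> \<in> space M. \<not> Pgood \<omega>} \<subseteq> N0" "emeasure M N0 = 0" "N0 \<in> sets M"
    by (rule AE_E)
  define E where "E = {\<omega> \<in> space M. hit_time Q1 (- \<beta> / 2) \<omega> \<le> hit_time Q2 (y / 2 + \<beta>) \<omega>}"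
  define G where "G = {\<omega> \<in> space M. (y + \<beta>) / 3 \<le> W T \<omega> - W 0 \<omega>}"
  define Os where "Os i = osc_set M W (real i * h) h (a / 8)" for i :: nat
  define Pk where "Pk i k = {\<omega> \<in> space M. a / 2 + b * (real k * h) \<le> W (real i * h) \<omega> - W (real (i + k) * h) \<omega>}" for i k :: nat
  define Osc where "Osc = (\<Union>i\<in>{..N}. Os i)"
  define PP where "PP = (\<Union>i\<in>{..N}. \<Union>k\<in>{1..N}. Pk i k)"
  have Gs: "G \<in> sets M" unfolding G_def using Tp by measurable
  have Oss: "Os i \<in> sets M" for i unfolding Os_def using hp by (intro osc_set_meas[OF bm _ hp]) simp
  have Os: "Osc \<in> sets M" unfolding Osc_def using Oss by auto
  have m1: "W (real i * h) \<in> borel_measurable M" for i :: nat using hp by (intro bm_meas[OF bm]) simp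
  have Pks: "Pk i k \<in> sets M" for i k
  proof -
    note [measurable] = m1[of i] m1[of "i+k"]
    show ?thesis unfolding Pk_def by measurable
  qed
  have PPs: "PP \<in> sets M" unfolding PP_def using Pks by auto
  have sub: "E \<subseteq> N0 \<union> G \<union> Osc \<union> PP"
  proof
    fix \<omega> assume \<omega>E: "\<omega> \<in> E"
    show "\<omega> \<in> N0 \<union> G \<union> Osc \<union> PP"
    proof (cases "\<omega> \<in> N0")
      case True then show ?thesis by simp
    next
      case False
      have sp: "\<omega> \<in> space M" using \<omega>E unfolding E_def by simp
      have "Pgood \<omega>" using sp False N0(1) by blast
      note P = this[unfolded Pgood_def]
      have hit: "Inf (ereal ` {t. 0 \<le> t \<and> Q1 t \<omega> = - \<beta> / 2}) \<le> Inf (ereal ` {t. 0 \<le> t \<and> Q2 t \<omega> = y / 2 + \<beta>})"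
        using \<omega>E unfolding E_def hit_time_def by simp
      have cW: "continuous_on {0..} (\<lambda>t. W t \<omega>)" and W0: "W 0 \<omega> = 0" using P by auto
      have disj: "(\<exists>s t. 0 \<le> s \<and> s < t \<and> t \<le> T \<and> (\<beta> + y * (t - s)) / 3 \<le> W s \<omega> - W t \<omega>)
         \<or> \<beta> * T / 2 - y / 2 - \<beta> / 2 < sqrt 2 * W T \<omega>"
        by (rule path_lemma[of \<beta> y T "\<lambda>t. Q1 t \<omega>" "\<lambda>t. Q2 t \<omega>" "\<lambda>t. W t \<omega>" "\<lambda>t. L t \<omega>"])
           (use bp yp Tp P hit in auto)
      then show ?thesis
      proof
        assume "\<exists>s t. 0 \<le> s \<and> s < t \<and> t \<le> T \<and> (\<beta> + y * (t - s)) / 3 \<le> W s \<omega> - W t \<omega>"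
        then obtain s t where st: "0 \<le> s" "s < t" "t \<le> T" and dd0: "(\<beta> + y * (t - s)) / 3 \<le> W s \<omega> - W t \<omega>"
          by blast
        have dd: "a + b * (t - s) \<le> W s \<omega> - W t \<omega>"
        proof -
          have "a + b * (t - s) = (\<beta> + y * (t - s)) / 3" unfolding a_def b_def by (simp add: field_simps)
          then show ?thesis using dd0 by simp
        qed
        show ?thesis
        proof (cases "\<omega> \<in> Osc")
          case True then show ?thesis by simp
        next
          case False
          have osc: "\<bar>W v \<omega> - W (real i * h) \<omega>\<bar> \<le> a / 8"
            if "i \<le> N" "v \<in> {real i * h .. real i * h + h}" for i v
          proof -
            have "\<omega> \<notin> Os i" using False that(1) unfolding Osc_def by auto
            moreover have "continuous_on {real i * h .. real i * h + h} (\<lambda>t. W t \<omega>)"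
              by (rule continuous_on_subset[OF cW]) (use hp in auto)
            ultimately show ?thesis unfolding Os_def using sp hp that(2) by (intro osc_set_det) auto
          qed
          obtain i k where ik: "i \<le> N" "k \<in> {1..N}"
            and pk: "a / 2 + b * (real k * h) \<le> W (real i * h) \<omega> - W (real (i + k) * h) \<omega>"
            using grid_lemma[of a b h T N "\<lambda>t. W t \<omega>", OF ap bp' hp bh TN osc st dd] by blast
          have "\<omega> \<in> Pk i k" unfolding Pk_def using sp pk by simp
          then have "\<omega> \<in> PP" unfolding PP_def using ik by blast
          then show ?thesis by simp
        qed
      next
        assume g: "\<beta> * T / 2 - y / 2 - \<beta> / 2 < sqrt 2 * W T \<omega>"
        have bT: "\<beta> * T / 2 = y + \<beta>" unfolding T_def using bp by simp
        have g2: "(y + \<beta>) / 2 < sqrt 2 * W T \<omega>" using g bT by argo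
        have pos: "0 < (y + \<beta>) / 2" using yp bp by simp
        have "0 < sqrt 2 * W T \<omega>" using pos g2 by (rule less_trans)
        then have D0: "0 \<le> W T \<omega>" by (simp add: zero_less_mult_iff)
        have s2: "sqrt 2 \<le> 3 / 2" by (rule real_le_lsqrt) (auto simp: power2_eq_square)
        have "sqrt 2 * W T \<omega> \<le> 3 / 2 * W T \<omega>" by (rule mult_right_mono[OF s2 D0])
        then have "(y + \<beta>) / 3 \<le> W T \<omega> - W 0 \<omega>" using g2 W0 by simp
        then have "\<omega> \<in> G" unfolding G_def using sp by simp
        then show ?thesis by simp
      qed
    qed
  qed
  have "measure M E \<le> measure M (N0 \<union> G \<union> Osc \<union> PP)"
  proof (cases "E \<in> sets M")
    case True then show ?thesis using sub N0(3) Gs Os PPs by (intro finite_measure.finite_measure_mono[OF fm]) auto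
  next
    case False then show ?thesis by (simp add: measure_notin_sets)
  qed
  also have "\<dots> \<le> measure M N0 + measure M G + measure M Osc + measure M PP"
  proof -
    have "measure M (N0 \<union> G \<union> Osc \<union> PP) \<le> measure M (N0 \<union> G \<union> Osc) + measure M PP"
      using N0(3) Gs Os PPs by (intro measure_Un_le) auto
    also have "measure M (N0 \<union> G \<union> Osc) \<le> measure M (N0 \<union> G) + measure M Osc"
      using N0(3) Gs Os by (intro measure_Un_le) auto
    also have "measure M (N0 \<union> G) \<le> measure M N0 + measure M G"
      using N0(3) Gs by (intro measure_Un_le) auto
    finally show ?thesis by simp
  qed
  also have "measure M N0 = 0" using N0(2) by (simp add: measure_def)
  also have "measure M G \<le> exp (- x / 36)"
  proof -
    have T0: "0 < T" unfolding T_def using bp yp by simp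
    have "measure M G \<le> exp (- ((y + \<beta>) / 3)\<^sup>2 / (2 * (T - 0)))"
      unfolding G_def using bp yp T0 by (intro bm_tail_up[OF bm]) auto
    also have "- ((y + \<beta>) / 3)\<^sup>2 / (2 * (T - 0)) = - ((y + \<beta>) * \<beta> / 36)"
      unfolding T_def using bp yp by (simp add: field_simps power2_eq_square)
    also have "exp (- ((y + \<beta>) * \<beta> / 36)) \<le> exp (- x / 36)"
      unfolding x_def using bp by (simp add: algebra_simps)
    finally show ?thesis by simp
  qed
  also have "measure M Osc \<le> (real N + 1) * (6 * exp (- x / 4))"
  proof -
    have r: "(a / 8)\<^sup>2 / (32 * h) = x / 4"
      unfolding a_def h_def x_def using bp yp by (simp add: field_simps power2_eq_square)
    have "measure M Osc \<le> (\<Sum>i\<in>{..N}. measure M (Os i))"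
      unfolding Osc_def using Oss by (intro measure_UNION_le) auto
    also have "\<dots> \<le> (\<Sum>i\<in>{..N}. 6 * exp (- x / 4))"
    proof (intro sum_mono)
      fix i assume "i \<in> {..N}"
      have "measure M (Os i) \<le> 6 * exp (- ((a / 8)\<^sup>2 / (32 * h)))"
        unfolding Os_def using ap hp r xK unfolding x_def by (intro osc_bound[OF bm]) auto
      then show "measure M (Os i) \<le> 6 * exp (- x / 4)" unfolding r by simp
    qed
    also have "\<dots> = (real N + 1) * (6 * exp (- x / 4))" by simp
    finally show ?thesis .
  qed
  also have "measure M PP \<le> (real N + 1) * exp (- x / 12)"
  proof -
    have Pkb: "measure M (Pk i k) \<le> exp (- x / 12) * (1/2)^k" if k: "1 \<le> k" for i k
    proof -
      define c where "c = a / 2 + b * (real k * h)"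
      have kh: "0 < real k * h" using k hp by simp
      have c0: "0 \<le> c" unfolding c_def using ap bp' kh by simp
      have Peq: "Pk i k = {\<omega> \<in> space M. W (real (i + k) * h) \<omega> - W (real i * h) \<omega> \<le> - c}"
        unfolding Pk_def c_def by auto
      have "measure M (Pk i k) \<le> exp (- c\<^sup>2 / (2 * (real (i + k) * h - real i * h)))"
        unfolding Peq by (rule bm_tail_low[OF bm]) (use hp k c0 in auto)
      also have "real (i + k) * h - real i * h = real k * h" by (simp add: algebra_simps)
      also have "exp (- c\<^sup>2 / (2 * (real k * h))) \<le> exp (- (x / 12 + real k))"
      proof -
        have "3 * a * b / 4 + b\<^sup>2 * (real k * h) / 4 \<le> c\<^sup>2 / (2 * (real k * h))"
          unfolding c_def by (rule pair_tail_arith[OF kh ap[THEN less_imp_le] bp'])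
        moreover have "3 * a * b / 4 = x / 12" unfolding a_def b_def x_def by simp
        moreover have "b\<^sup>2 * (real k * h) / 4 = real k * (x / 165888)"
          unfolding b_def h_def x_def using yp bp by (simp add: field_simps power2_eq_square)
        moreover have "real k \<le> real k * (x / 165888)" using xK unfolding x_def
          by (intro mult_le_cancel_left1[THEN iffD2]) auto
        ultimately have "x / 12 + real k \<le> c\<^sup>2 / (2 * (real k * h))" by linarith
        then show ?thesis by simp
      qed
      also have "\<dots> = exp (- x / 12) * exp (- real k)" by (simp add: exp_add[symmetric])
      also have "\<dots> \<le> exp (- x / 12) * (1/2)^k" by (intro mult_left_mono exp_neg_nat_half) auto
      finally show ?thesis .
    qed
    have "measure M PP \<le> (\<Sum>i\<in>{..N}. measure M (\<Union>k\<in>{1..N}. Pk i k))"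
      unfolding PP_def using Pks by (intro measure_UNION_le) auto
    also have "\<dots> \<le> (\<Sum>i\<in>{..N}. exp (- x / 12))"
    proof (intro sum_mono)
      fix i assume "i \<in> {..N}"
      have "measure M (\<Union>k\<in>{1..N}. Pk i k) \<le> (\<Sum>k\<in>{1..N}. measure M (Pk i k))"
        using Pks by (intro measure_UNION_le) auto
      also have "\<dots> \<le> (\<Sum>k\<in>{1..N}. exp (- x / 12) * (1/2)^k)"
        using Pkb by (intro sum_mono) auto
      also have "\<dots> = exp (- x / 12) * (\<Sum>k\<in>{1..N}. (1/2)^k)" by (simp add: sum_distrib_left)
      also have "\<dots> \<le> exp (- x / 12) * 1" by (intro mult_left_mono geom_half) auto
      finally show "measure M (\<Union>k\<in>{1..N}. Pk i k) \<le> exp (- x / 12)" by simp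
    qed
    also have "\<dots> = (real N + 1) * exp (- x / 12)" by simp
    finally show ?thesis .
  qed
  finally have "measure M E \<le> exp (- x / 36) + (real N + 1) * (6 * exp (- x / 4) + exp (- x / 12))"
    by (simp add: algebra_simps)
  then show ?thesis unfolding E_def x_def N_def T_def h_def by simp
qed

lemma exp_ge_sq4: "0 \<le> z \<Longrightarrow> z\<^sup>2 / 4 \<le> exp (z::real)"
proof -
  assume z: "0 \<le> z"
  have "1 + z / 2 \<le> exp (z / 2)" by (rule exp_ge_add_one_self)
  then have "z / 2 \<le> exp (z / 2)" by linarith
  then have "(z / 2)\<^sup>2 \<le> (exp (z / 2))\<^sup>2" using z by (intro power_mono) auto
  also have "(exp (z / 2))\<^sup>2 = exp z" by (simp add: power2_eq_square exp_add[symmetric])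
  finally show ?thesis by (simp add: power2_eq_square)
qed

lemma u_bound:
  fixes \<beta> y :: real
  assumes bp: "\<beta> > 0" and hyp: "(1 \<le> \<beta> \<and> 1 / (4 * \<beta>) \<le> y) \<or> (\<beta> < 1 \<and> 64 / \<beta> * ln (1 / \<beta>) \<le> y)"
  shows "1 / \<beta>\<^sup>2 \<le> exp (\<beta> * y / 32)" and "y > 0"
proof -
  show "1 / \<beta>\<^sup>2 \<le> exp (\<beta> * y / 32)"
  proof (cases "1 \<le> \<beta>")
    case True
    have "1 \<le> \<beta> * \<beta>" using True mult_mono[of 1 \<beta> 1 \<beta>] by simp
    then have "1 / \<beta>\<^sup>2 \<le> 1" by (simp add: power2_eq_square)
    also have "1 \<le> exp (\<beta> * y / 32)"
    proof -
      have "y > 0" using hyp True bp by (auto intro: less_le_trans[of 0 "1/(4*\<beta>)"])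
      then show ?thesis using bp by simp
    qed
    finally show ?thesis .
  next
    case False
    then have b1: "\<beta> < 1" by simp
    with hyp have hy: "64 / \<beta> * ln (1 / \<beta>) \<le> y" by auto
    have "64 * ln (1 / \<beta>) \<le> \<beta> * y"
    proof -
      have "\<beta> * (64 / \<beta> * ln (1 / \<beta>)) \<le> \<beta> * y" using hy bp by (intro mult_left_mono) auto
      then show ?thesis using bp by simp
    qed
    then have "2 * ln (1 / \<beta>) \<le> \<beta> * y / 32" by simp
    then have "exp (2 * ln (1 / \<beta>)) \<le> exp (\<beta> * y / 32)" by simp
    moreover have "exp (2 * ln (1 / \<beta>)) = 1 / \<beta>\<^sup>2"
      using bp by (simp add: exp_of_nat_mult[of 2, simplified] power2_eq_square)
    ultimately show ?thesis by simp
  qed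
  show "y > 0"
  proof (cases "1 \<le> \<beta>")
    case True
    then show ?thesis using hyp bp by (auto intro: less_le_trans[of 0 "1/(4*\<beta>)"])
  next
    case False
    then have "0 < ln (1 / \<beta>)" using bp by simp
    then have "0 < 64 / \<beta> * ln (1 / \<beta>)" using bp by simp
    then show ?thesis using hyp False by auto
  qed
qed

lemma arith_part:
  fixes \<beta> y :: real
  assumes bp: "\<beta> > 0" and yp: "y > 0" and u: "1 / \<beta>\<^sup>2 \<le> exp (\<beta> * y / 32)" and xK: "165888 \<le> \<beta> * y"
  shows "exp (- (\<beta> * y) / 36) + (real (nat \<lceil>(2 * (y + \<beta>) / \<beta>) / (\<beta> / (4608 * y))\<rceil>) + 1)
        * (6 * exp (- (\<beta> * y) / 4) + exp (- (\<beta> * y) / 12)) \<le> 5000000000 * exp (- (\<beta> * y) / 96)"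
proof -
  define x where "x = \<beta> * y"
  define v where "v = 1 / \<beta>\<^sup>2"
  define z where "z = (2 * (y + \<beta>) / \<beta>) / (\<beta> / (4608 * y))"
  have x1: "1 \<le> x" using xK unfolding x_def by simp
  have v0: "0 \<le> v" unfolding v_def by simp
  have zeq: "z = 9216 * (x\<^sup>2 * v\<^sup>2 + x * v)"
    unfolding z_def x_def v_def using bp yp by (simp add: field_simps power2_eq_square)
  have z0: "0 \<le> z" using zeq v0 x1 by simp
  have N1: "real (nat \<lceil>z\<rceil>) + 1 \<le> z + 2"
  proof -
    have "real (nat \<lceil>z\<rceil>) = of_int \<lceil>z\<rceil>" using z0 by simp
    also have "\<dots> \<le> z + 1" by linarith
    finally show ?thesis by simp
  qed
  define E where "E = exp (x / 16)"
  have E1: "1 \<le> E" unfolding E_def using x1 by simp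
  have vE: "v \<le> E"
  proof -
    have "v \<le> exp (x / 32)" using u unfolding v_def x_def .
    also have "\<dots> \<le> E" unfolding E_def using x1 by simp
    finally show ?thesis .
  qed
  have v2E: "v\<^sup>2 \<le> E"
  proof -
    have "v\<^sup>2 \<le> (exp (x / 32))\<^sup>2" using u v0 unfolding v_def x_def by (intro power_mono) auto
    also have "(exp (x / 32))\<^sup>2 = E" unfolding E_def by (simp add: power2_eq_square exp_add[symmetric])
    finally show ?thesis .
  qed
  have "z + 2 \<le> 9216 * (x\<^sup>2 * E + x * E) + 2 * E"
  proof -
    have "x\<^sup>2 * v\<^sup>2 \<le> x\<^sup>2 * E" using v2E by (intro mult_left_mono) auto
    moreover have "x * v \<le> x * E" using vE x1 by (intro mult_left_mono) auto
    ultimately have "z \<le> 9216 * (x\<^sup>2 * E + x * E)" unfolding zeq by simp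
    then show ?thesis using E1 by simp
  qed
  also have "\<dots> \<le> 18434 * x\<^sup>2 * E"
  proof -
    have "x \<le> x\<^sup>2" using x1 by (simp add: power2_eq_square)
    then have "x * E \<le> x\<^sup>2 * E" using E1 by (intro mult_right_mono) auto
    moreover have "1 \<le> x\<^sup>2" using x1 mult_mono[of 1 x 1 x] by (simp add: power2_eq_square)
    then have "E \<le> x\<^sup>2 * E" using E1 by (simp add: mult_le_cancel_right1)
    ultimately show ?thesis by (simp add: algebra_simps)
  qed
  finally have Nb: "real (nat \<lceil>z\<rceil>) + 1 \<le> 18434 * x\<^sup>2 * E" using N1 by simp
  have Sb: "6 * exp (- x / 4) + exp (- x / 12) \<le> 7 * exp (- x / 12)"
  proof -
    have "exp (- x / 4) \<le> exp (- x / 12)" using x1 by simp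
    then show ?thesis by simp
  qed
  have S0: "0 \<le> 6 * exp (- x / 4) + exp (- x / 12)" by simp
  have "(real (nat \<lceil>z\<rceil>) + 1) * (6 * exp (- x / 4) + exp (- x / 12)) \<le> (18434 * x\<^sup>2 * E) * (7 * exp (- x / 12))"
    using Nb Sb S0 E1 by (intro mult_mono) auto
  also have "\<dots> = 129038 * x\<^sup>2 * exp (- x / 48)"
  proof -
    have "E * exp (- x / 12) = exp (- x / 48)" unfolding E_def by (simp add: exp_add[symmetric])
    then show ?thesis by (simp add: algebra_simps)
  qed
  also have "\<dots> \<le> 129038 * (36864 * exp (x / 96)) * exp (- x / 48)"
  proof -
    have "(x / 96)\<^sup>2 / 4 \<le> exp (x / 96)" using x1 by (intro exp_ge_sq4) auto
    then have "x\<^sup>2 \<le> 36864 * exp (x / 96)" by (simp add: power2_eq_square)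
    then show ?thesis by (intro mult_right_mono mult_left_mono) auto
  qed
  also have "\<dots> = 4756856832 * exp (- x / 96)"
  proof -
    have "exp (x / 96) * exp (- x / 48) = exp (- x / 96)" by (simp add: exp_add[symmetric])
    then show ?thesis by (simp add: algebra_simps)
  qed
  finally have P1: "(real (nat \<lceil>z\<rceil>) + 1) * (6 * exp (- x / 4) + exp (- x / 12)) \<le> 4756856832 * exp (- x / 96)" .
  have P2: "exp (- x / 36) \<le> exp (- x / 96)" using x1 by simp
  have "exp (- x / 36) + (real (nat \<lceil>z\<rceil>) + 1) * (6 * exp (- x / 4) + exp (- x / 12)) \<le> 4756856833 * exp (- x / 96)"
    using P1 P2 by argo
  also have "\<dots> \<le> 5000000000 * exp (- x / 96)" by simp
  finally show ?thesis unfolding x_def z_def by simp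
qed

theorem lemma5p1:
  shows "\<exists>C1>0. \<exists>C2>0. \<forall>\<beta>::real. \<forall>y::real.
     \<beta> > 0 \<and> ((1 \<le> \<beta> \<and> 1 / (4 * \<beta>) \<le> y) \<or> (\<beta> < 1 \<and> 64 / \<beta> * ln (1 / \<beta>) \<le> y)) \<longrightarrow>
     (\<forall>(M::'a measure) W Q1 Q2 L.
        standard_BM M W \<and> reflected_solution M \<beta> 0 (y + \<beta>) W Q1 Q2 L \<longrightarrow>
        measure M {\<omega> \<in> space M. hit_time Q1 (- \<beta> / 2) \<omega> \<le> hit_time Q2 (y / 2 + \<beta>) \<omega>}
          \<le> C1 * exp (- C2 * \<beta> * y))"
proof -
  have main: "measure M {\<omega> \<in> space M. hit_time Q1 (- \<beta> / 2) \<omega> \<le> hit_time Q2 (y / 2 + \<beta>) \<omega>}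
          \<le> (exp 1728 + 5000000000) * exp (- (1/96) * \<beta> * y)"
    if H: "\<beta> > 0 \<and> ((1 \<le> \<beta> \<and> 1 / (4 * \<beta>) \<le> y) \<or> (\<beta> < 1 \<and> 64 / \<beta> * ln (1 / \<beta>) \<le> y))"
    and H2: "standard_BM M W \<and> reflected_solution M \<beta> 0 (y + \<beta>) W Q1 Q2 L"
    for \<beta> y :: real and M :: "'a measure" and W Q1 Q2 L
  proof -
  have bp: "\<beta> > 0" using H by simp
  have hyp: "(1 \<le> \<beta> \<and> 1 / (4 * \<beta>) \<le> y) \<or> (\<beta> < 1 \<and> 64 / \<beta> * ln (1 / \<beta>) \<le> y)" using H by simp
  have bm: "standard_BM M W" and rs: "reflected_solution M \<beta> 0 (y + \<beta>) W Q1 Q2 L" using H2 by auto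
  have yp: "y > 0" by (rule u_bound(2)[OF bp hyp])
  have ex: "exp (- (1/96) * \<beta> * y) = exp (- (\<beta> * y) / 96)" by simp
  have C0: "0 \<le> exp (- (\<beta> * y) / 96)" by simp
  show ?thesis
  proof (cases "165888 \<le> \<beta> * y")
    case True
    have "measure M {\<omega> \<in> space M. hit_time Q1 (- \<beta> / 2) \<omega> \<le> hit_time Q2 (y / 2 + \<beta>) \<omega>}
      \<le> exp (- (\<beta> * y) / 36) + (real (nat \<lceil>(2 * (y + \<beta>) / \<beta>) / (\<beta> / (4608 * y))\<rceil>) + 1)
        * (6 * exp (- (\<beta> * y) / 4) + exp (- (\<beta> * y) / 12))"
      by (rule prob_part[OF bm rs bp yp True])
    also have "\<dots> \<le> 5000000000 * exp (- (\<beta> * y) / 96)"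
      by (rule arith_part[OF bp yp u_bound(1)[OF bp hyp] True])
    also have "\<dots> \<le> (exp 1728 + 5000000000) * exp (- (\<beta> * y) / 96)"
      using C0 by (intro mult_right_mono) auto
    finally show ?thesis unfolding ex .
  next
    case False
    have ps: "prob_space M" using bm unfolding standard_BM_def by auto
    have "measure M {\<omega> \<in> space M. hit_time Q1 (- \<beta> / 2) \<omega> \<le> hit_time Q2 (y / 2 + \<beta>) \<omega>} \<le> 1"
      using prob_space.prob_le_1[OF ps] by simp
    also have "1 \<le> exp 1728 * exp (- (\<beta> * y) / 96)"
    proof -
      have "0 \<le> 1728 + - (\<beta> * y) / 96" using False by simp
      then have "1 \<le> exp (1728 + - (\<beta> * y) / 96)" by simp
      then show ?thesis by (simp only: exp_add)
    qed
    also have "\<dots> \<le> (exp 1728 + 5000000000) * exp (- (\<beta> * y) / 96)"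
      using C0 by (intro mult_right_mono) auto
    finally show ?thesis unfolding ex .
  qed
  qed
  show ?thesis
    apply (rule exI[of _ "exp 1728 + 5000000000"])
    apply (rule conjI)
    subgoal by (simp add: add_pos_pos)
    apply (rule exI[of _ "1/96"])
    apply (rule conjI)
    subgoal by simp
    using main by blast
qed

end
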